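(* Let $\mathbb F_q$ be a finite field of characteristic $2$, and let $(C_i\subsetneq\mathbb F_q^n)_{i\in[t]}$ be a collection of proper classical codes with product-expansion at least $\rho>0$. Then there exists $\rho'=\rho'(\rho,t)>0$ depending only on $\rho$ and $t$ such that for every subcode $C_t'\subseteq C_t$, the collection $(C_1,\dots,C_{t-1},C_t')$ has product-expansion at least $\rho'$.
   Context: Product-expansion: For codes $C_1\subseteq\mathbb F_q^{n_1},\dots,C_t\subseteq\mathbb F_q^{n_t}$, identify $\mathbb F_q^{n_1}\otimes\cdots\otimes\mathbb F_q^{n_t}$ with $t$-dimensional arrays; a direction-$i$ column is the vector in $\mathbb F_q^{n_i}$ obtained by fixing all coordinates except the $i$-th. $C^{(i)}$ is the space of arrays all of whose direction-$i$ columns lie in $C_i$, and $C_1\boxplus\cdots\boxplus C_t=C^{(1)}+\cdots+C^{(t)}$. $|c|$ is the number of nonzero entries of an array, $|c|_i$ its number of nonzero direction-$i$ columns. The product-expansion of $(C_i)_{i\in[t]}$ is the largest $\rho\ge0$ such that every $c\in C_1\boxplus\cdots\boxplus C_t$ has a decomposition $c=c_1+\cdots+c_t$ with $c_i\in C^{(i)}$ and $|c|\ge\rho\sum_in_i|c_i|_i$. *)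

theory Defs
  imports "HOL-Algebra.Algebra"
begin

(* Finite fields are HOL-Algebra structures with carrier a set of naturals
   (every finite field is isomorphic to one of these). This lets the
   constant rho' be chosen before the field, i.e. independent of q. *)

definition char_two :: "nat ring \<Rightarrow> bool" where
  "char_two R \<longleftrightarrow> \<one>\<^bsub>R\<^esub> \<oplus>\<^bsub>R\<^esub> \<one>\<^bsub>R\<^esub> = \<zero>\<^bsub>R\<^esub>"

definition vecs :: "nat ring \<Rightarrow> nat \<Rightarrow> (nat \<Rightarrow> nat) set" where
  "vecs R m = {v. (\<forall>j<m. v j \<in> carrier R) \<and> (\<forall>j\<ge>m. v j = \<zero>\<^bsub>R\<^esub>)}"

definition lin_code :: "nat ring \<Rightarrow> nat \<Rightarrow> (nat \<Rightarrow> nat) set \<Rightarrow> bool" where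
  "lin_code R m C \<longleftrightarrow> C \<subseteq> vecs R m \<and> (\<lambda>_. \<zero>\<^bsub>R\<^esub>) \<in> C
     \<and> (\<forall>u\<in>C. \<forall>v\<in>C. (\<lambda>j. u j \<oplus>\<^bsub>R\<^esub> v j) \<in> C)
     \<and> (\<forall>a\<in>carrier R. \<forall>v\<in>C. (\<lambda>j. a \<otimes>\<^bsub>R\<^esub> v j) \<in> C)"

definition positions :: "(nat \<Rightarrow> nat) \<Rightarrow> nat \<Rightarrow> (nat \<Rightarrow> nat) set" where
  "positions ns t = Pi\<^sub>E {..<t} (\<lambda>i. {..<ns i})"

text \<open>The tensor product space F^{n_0} (x) ... (x) F^{n_(t-1)} as arrays, zero outside positions.\<close>
definition arrays :: "nat ring \<Rightarrow> (nat \<Rightarrow> nat) \<Rightarrow> nat \<Rightarrow> ((nat \<Rightarrow> nat) \<Rightarrow> nat) set" where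
  "arrays R ns t = {c. (\<forall>p\<in>positions ns t. c p \<in> carrier R)
                       \<and> (\<forall>p. p \<notin> positions ns t \<longrightarrow> c p = \<zero>\<^bsub>R\<^esub>)}"

definition column :: "nat ring \<Rightarrow> (nat \<Rightarrow> nat) \<Rightarrow> ((nat \<Rightarrow> nat) \<Rightarrow> nat) \<Rightarrow> nat \<Rightarrow> (nat \<Rightarrow> nat) \<Rightarrow> nat \<Rightarrow> nat" where
  "column R ns c i p = (\<lambda>j. if j < ns i then c (p(i := j)) else \<zero>\<^bsub>R\<^esub>)"

definition dir_code :: "nat ring \<Rightarrow> (nat \<Rightarrow> nat) \<Rightarrow> nat \<Rightarrow> (nat \<Rightarrow> (nat \<Rightarrow> nat) set) \<Rightarrow> nat
                        \<Rightarrow> ((nat \<Rightarrow> nat) \<Rightarrow> nat) set" where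
  "dir_code R ns t C i = {c \<in> arrays R ns t. \<forall>p\<in>positions ns t. column R ns c i p \<in> C i}"

definition arr_sum :: "nat ring \<Rightarrow> nat \<Rightarrow> (nat \<Rightarrow> (nat \<Rightarrow> nat) \<Rightarrow> nat) \<Rightarrow> (nat \<Rightarrow> nat) \<Rightarrow> nat" where
  "arr_sum R t cs = (\<lambda>p. finsum R (\<lambda>i. cs i p) {..<t})"

definition sum_code :: "nat ring \<Rightarrow> (nat \<Rightarrow> nat) \<Rightarrow> nat \<Rightarrow> (nat \<Rightarrow> (nat \<Rightarrow> nat) set)
                        \<Rightarrow> ((nat \<Rightarrow> nat) \<Rightarrow> nat) set" where
  "sum_code R ns t C = {arr_sum R t cs | cs. \<forall>i<t. cs i \<in> dir_code R ns t C i}"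

definition weight :: "nat ring \<Rightarrow> (nat \<Rightarrow> nat) \<Rightarrow> nat \<Rightarrow> ((nat \<Rightarrow> nat) \<Rightarrow> nat) \<Rightarrow> nat" where
  "weight R ns t c = card {p \<in> positions ns t. c p \<noteq> \<zero>\<^bsub>R\<^esub>}"

text \<open>|c|_i: number of nonzero direction-i columns; each column is represented
  by its unique position with i-th coordinate 0.\<close>
definition col_weight :: "nat ring \<Rightarrow> (nat \<Rightarrow> nat) \<Rightarrow> nat \<Rightarrow> ((nat \<Rightarrow> nat) \<Rightarrow> nat) \<Rightarrow> nat \<Rightarrow> nat" where
  "col_weight R ns t c i = card {p \<in> positions ns t. p i = 0 \<and> column R ns c i p \<noteq> (\<lambda>_. \<zero>\<^bsub>R\<^esub>)}"

text \<open>The product-expansion of (C_i)_{i<t} is at least rho: since the product-expansion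
  is the largest rho with the decomposition property below (and the property is
  monotone in rho), "product-expansion >= rho" means the property holds at rho.\<close>
definition pe_at_least :: "nat ring \<Rightarrow> (nat \<Rightarrow> nat) \<Rightarrow> nat \<Rightarrow> (nat \<Rightarrow> (nat \<Rightarrow> nat) set) \<Rightarrow> real \<Rightarrow> bool" where
  "pe_at_least R ns t C \<rho> \<longleftrightarrow>
     (\<forall>c\<in>sum_code R ns t C. \<exists>cs. (\<forall>i<t. cs i \<in> dir_code R ns t C i) \<and> c = arr_sum R t cs
        \<and> real (weight R ns t c) \<ge> \<rho> * (\<Sum>i<t. real (ns i) * real (col_weight R ns t (cs i) i)))"

end

theory Submission
  imports Defs
begin


definition vadd :: "nat ring \<Rightarrow> (nat \<Rightarrow> nat) \<Rightarrow> (nat \<Rightarrow> nat) \<Rightarrow> nat \<Rightarrow> nat" where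
  "vadd R u v = (\<lambda>j. u j \<oplus>\<^bsub>R\<^esub> v j)"
definition vsc :: "nat ring \<Rightarrow> nat \<Rightarrow> (nat \<Rightarrow> nat) \<Rightarrow> nat \<Rightarrow> nat" where
  "vsc R a v = (\<lambda>j. a \<otimes>\<^bsub>R\<^esub> v j)"
definition uvec :: "nat ring \<Rightarrow> nat \<Rightarrow> nat \<Rightarrow> nat" where
  "uvec R m = (\<lambda>k. if k = m then \<one>\<^bsub>R\<^esub> else \<zero>\<^bsub>R\<^esub>)"
definition lin_map :: "nat ring \<Rightarrow> nat \<Rightarrow> ((nat \<Rightarrow> nat) \<Rightarrow> nat \<Rightarrow> nat) \<Rightarrow> bool" where
  "lin_map R n L \<longleftrightarrow> (\<forall>v\<in>vecs R n. L v \<in> vecs R n)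
     \<and> (\<forall>u\<in>vecs R n. \<forall>v\<in>vecs R n. L (vadd R u v) = vadd R (L u) (L v))
     \<and> (\<forall>a\<in>carrier R. \<forall>v\<in>vecs R n. L (vsc R a v) = vsc R a (L v))"

locale F2 = field R for R :: "nat ring" (structure) +
  assumes c2: "\<one> \<oplus> \<one> = \<zero>"
begin

lemma two[simp]: "a \<in> carrier R \<Longrightarrow> a \<oplus> a = \<zero>"
proof -
  assume a: "a \<in> carrier R"
  have "a \<oplus> a = (\<one> \<oplus> \<one>) \<otimes> a" using a by (simp add: l_distr)
  also have "\<dots> = \<zero>" using a by (simp add: c2)
  finally show ?thesis .
qed

lemma two'[simp]: "a \<in> carrier R \<Longrightarrow> b \<in> carrier R \<Longrightarrow> a \<oplus> (a \<oplus> b) = b"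
  by (simp add: a_assoc[symmetric])

lemma vecs_carrier[simp]: "v \<in> vecs R n \<Longrightarrow> v k \<in> carrier R"
  unfolding vecs_def by (cases "k < n") auto

lemma vecs_zero_out: "v \<in> vecs R n \<Longrightarrow> n \<le> k \<Longrightarrow> v k = \<zero>"
  unfolding vecs_def by auto

lemma vadd_vecs[simp]: "u \<in> vecs R n \<Longrightarrow> v \<in> vecs R n \<Longrightarrow> vadd R u v \<in> vecs R n"
  unfolding vecs_def vadd_def by auto

lemma vsc_vecs[simp]: "a \<in> carrier R \<Longrightarrow> v \<in> vecs R n \<Longrightarrow> vsc R a v \<in> vecs R n"
  unfolding vecs_def vsc_def by auto

lemma zero_vecs[simp]: "(\<lambda>_. \<zero>) \<in> vecs R n"
  unfolding vecs_def by auto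

lemma uvec_vecs[simp]: "m < n \<Longrightarrow> uvec R m \<in> vecs R n"
  unfolding vecs_def uvec_def by auto

lemma uvec_carrier[simp]: "uvec R m k \<in> carrier R"
  unfolding uvec_def by auto

lemma vecs_lin_code: "lin_code R n (vecs R n)"
  unfolding lin_code_def using vadd_vecs vsc_vecs unfolding vadd_def vsc_def by auto

lemma code_vecs: "lin_code R n C \<Longrightarrow> v \<in> C \<Longrightarrow> v \<in> vecs R n"
  unfolding lin_code_def by auto

lemma code_add: "lin_code R n C \<Longrightarrow> u \<in> C \<Longrightarrow> v \<in> C \<Longrightarrow> vadd R u v \<in> C"
  unfolding lin_code_def vadd_def by auto

lemma code_sc: "lin_code R n C \<Longrightarrow> a \<in> carrier R \<Longrightarrow> v \<in> C \<Longrightarrow> vsc R a v \<in> C"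
  unfolding lin_code_def vsc_def by auto

lemma code_zero: "lin_code R n C \<Longrightarrow> (\<lambda>_. \<zero>) \<in> C"
  unfolding lin_code_def by auto

lemma lincomb:
  assumes C: "lin_code R n C" and fin: "finite A"
    and v: "\<forall>m\<in>A. v m \<in> C" and a: "\<forall>m\<in>A. a m \<in> carrier R"
  shows "(\<lambda>k. \<Oplus>m\<in>A. a m \<otimes> v m k) \<in> C"
  using fin v a
proof (induction A rule: finite_induct)
  case empty
  then show ?case using code_zero[OF C] by simp
next
  case (insert x A)
  have vc: "\<And>m k. m \<in> insert x A \<Longrightarrow> v m k \<in> carrier R"
    using insert.prems by (blast intro: vecs_carrier code_vecs[OF C])
  have eq: "(\<lambda>k. \<Oplus>m\<in>insert x A. a m \<otimes> v m k)
      = vadd R (vsc R (a x) (v x)) (\<lambda>k. \<Oplus>m\<in>A. a m \<otimes> v m k)"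
    unfolding vadd_def vsc_def
    by (rule ext, subst finsum_insert) (use insert vc in \<open>auto simp: Pi_def\<close>)
  show ?case unfolding eq
    by (rule code_add[OF C], rule code_sc[OF C]) (use insert in auto)
qed

lemma expand:
  assumes v: "v \<in> vecs R n"
  shows "(\<lambda>k. \<Oplus>m\<in>{..<n}. v m \<otimes> uvec R m k) = v"
proof
  fix k
  show "(\<Oplus>m\<in>{..<n}. v m \<otimes> uvec R m k) = v k"
  proof (cases "k < n")
    case True
    have "(\<Oplus>m\<in>{..<n}. v m \<otimes> uvec R m k) = (\<Oplus>m\<in>{..<n}. if k = m then v m else \<zero>)"
      by (rule finsum_cong') (use v in \<open>auto simp: uvec_def\<close>)
    also have "\<dots> = v k" using True v by (subst finsum_singleton) auto
    finally show ?thesis .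
  next
    case False
    have "(\<Oplus>m\<in>{..<n}. v m \<otimes> uvec R m k) = (\<Oplus>m\<in>{..<n}. \<zero>)"
      by (rule finsum_cong') (use v False in \<open>auto simp: uvec_def\<close>)
    also have "\<dots> = v k" using False v vecs_zero_out[OF v] by simp
    finally show ?thesis .
  qed
qed

lemma lin_map_vecs: "lin_map R n L \<Longrightarrow> v \<in> vecs R n \<Longrightarrow> L v \<in> vecs R n"
  unfolding lin_map_def by auto

lemma lin_map_sum:
  assumes L: "lin_map R n L" and fin: "finite A"
    and w: "\<forall>m\<in>A. w m \<in> vecs R n" and a: "\<forall>m\<in>A. a m \<in> carrier R"
  shows "L (\<lambda>k. \<Oplus>m\<in>A. a m \<otimes> w m k) = (\<lambda>k. \<Oplus>m\<in>A. a m \<otimes> L (w m) k)"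
  using fin w a
proof (induction A rule: finite_induct)
  case empty
  have "L (\<lambda>_. \<zero>) = L (vsc R \<zero> (\<lambda>_. \<zero>))" by (simp add: vsc_def)
  also have "\<dots> = vsc R \<zero> (L (\<lambda>_. \<zero>))" using L unfolding lin_map_def by auto
  also have "\<dots> = (\<lambda>_. \<zero>)" unfolding vsc_def
    using lin_map_vecs[OF L zero_vecs] by auto
  finally show ?case by simp
next
  case (insert x A)
  have vc: "\<And>m k. m \<in> insert x A \<Longrightarrow> w m k \<in> carrier R"
    using insert.prems by (blast intro: vecs_carrier)
  have vc2: "\<And>m k. m \<in> insert x A \<Longrightarrow> L (w m) k \<in> carrier R"
    using insert.prems by (blast intro: vecs_carrier lin_map_vecs[OF L])
  have eq: "(\<lambda>k. \<Oplus>m\<in>insert x A. a m \<otimes> w m k)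
      = vadd R (vsc R (a x) (w x)) (\<lambda>k. \<Oplus>m\<in>A. a m \<otimes> w m k)"
    unfolding vadd_def vsc_def
    by (rule ext, subst finsum_insert) (use insert vc in \<open>auto simp: Pi_def\<close>)
  have eq2: "(\<lambda>k. \<Oplus>m\<in>insert x A. a m \<otimes> L (w m) k)
      = vadd R (vsc R (a x) (L (w x))) (\<lambda>k. \<Oplus>m\<in>A. a m \<otimes> L (w m) k)"
    unfolding vadd_def vsc_def
    by (rule ext, subst finsum_insert) (use insert vc2 in \<open>auto simp: Pi_def\<close>)
  have inv: "(\<lambda>k. \<Oplus>m\<in>A. a m \<otimes> w m k) \<in> vecs R n"
    by (rule lincomb[OF vecs_lin_code]) (use insert in auto)
  show ?case unfolding eq eq2
    using L insert inv unfolding lin_map_def by auto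
qed

lemma lin_expand:
  assumes L: "lin_map R n L" and v: "v \<in> vecs R n"
  shows "L v = (\<lambda>k. \<Oplus>m\<in>{..<n}. v m \<otimes> L (uvec R m) k)"
proof -
  have "L v = L (\<lambda>k. \<Oplus>m\<in>{..<n}. v m \<otimes> uvec R m k)" using expand[OF v] by simp
  also have "\<dots> = (\<lambda>k. \<Oplus>m\<in>{..<n}. v m \<otimes> L (uvec R m) k)"
    by (rule lin_map_sum[OF L]) (use v in auto)
  finally show ?thesis .
qed

end

context F2 begin

lemma vecs_mono: "k \<le> n \<Longrightarrow> v \<in> vecs R k \<Longrightarrow> v \<in> vecs R n"
  unfolding vecs_def by (auto, metis not_le zero_closed)

lemma proj_k:
  assumes U: "lin_code R n U"
  shows "k \<le> n \<Longrightarrow> \<exists>P. (\<forall>v\<in>vecs R k. P v \<in> U)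
     \<and> (\<forall>u\<in>vecs R k. \<forall>v\<in>vecs R k. P (vadd R u v) = vadd R (P u) (P v))
     \<and> (\<forall>a\<in>carrier R. \<forall>v\<in>vecs R k. P (vsc R a v) = vsc R a (P v))
     \<and> (\<forall>u\<in>U \<inter> vecs R k. P u = u)"
proof (induction k)
  case 0
  have v0: "\<And>v. v \<in> vecs R 0 \<Longrightarrow> v = (\<lambda>_. \<zero>)" unfolding vecs_def by auto
  show ?case
  proof (rule exI[of _ "\<lambda>_. (\<lambda>_. \<zero>)"], intro conjI ballI)
    show "\<And>v. (\<lambda>_. \<zero>) \<in> U" using code_zero[OF U] .
    show "\<And>u v. (\<lambda>_. \<zero>) = vadd R (\<lambda>_. \<zero>) (\<lambda>_. \<zero>)" by (simp add: vadd_def)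
    show "\<And>a v. a \<in> carrier R \<Longrightarrow> (\<lambda>_. \<zero>) = vsc R a (\<lambda>_. \<zero>)" by (simp add: vsc_def)
    show "\<And>u. u \<in> U \<inter> vecs R 0 \<Longrightarrow> (\<lambda>_. \<zero>) = u" using v0 by auto
  qed
next
  case (Suc k)
  then obtain P where Pin: "\<forall>v\<in>vecs R k. P v \<in> U"
    and Padd: "\<forall>u\<in>vecs R k. \<forall>v\<in>vecs R k. P (vadd R u v) = vadd R (P u) (P v)"
    and Psc: "\<forall>a\<in>carrier R. \<forall>v\<in>vecs R k. P (vsc R a v) = vsc R a (P v)"
    and Pfix: "\<forall>u\<in>U \<inter> vecs R k. P u = u" by auto
  have Pc: "\<And>v j. v \<in> vecs R k \<Longrightarrow> P v j \<in> carrier R"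
    using Pin code_vecs[OF U] vecs_carrier by blast
  show ?case
  proof (cases "\<exists>w\<in>U \<inter> vecs R (Suc k). w k \<noteq> \<zero>")
    case True
    then obtain w0 where w0: "w0 \<in> U" "w0 \<in> vecs R (Suc k)" "w0 k \<noteq> \<zero>" by auto
    define w where "w = vsc R (inv (w0 k)) w0"
    have w0k: "w0 k \<in> carrier R" using w0 vecs_carrier by blast
    have ik: "inv (w0 k) \<in> carrier R" using w0k w0(3) field_Units by auto
    have wU: "w \<in> U" unfolding w_def by (rule code_sc[OF U ik w0(1)])
    have wv: "w \<in> vecs R (Suc k)" unfolding w_def by (rule vsc_vecs[OF ik w0(2)])
    have wk: "w k = \<one>" unfolding w_def vsc_def using w0k w0(3) field_Units by auto
    have wc: "\<And>j. w j \<in> carrier R" using wv vecs_carrier by blast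
    define r where "r v = vadd R v (vsc R (v k) w)" for v
    define P' where "P' v = vadd R (P (r v)) (vsc R (v k) w)" for v
    have rv: "r v \<in> vecs R k" if v: "v \<in> vecs R (Suc k)" for v
    proof -
      have vc: "\<And>j. v j \<in> carrier R" using v vecs_carrier by blast
      have "r v j = \<zero>" if "j \<ge> k" for j
      proof (cases "j = k")
        case True then show ?thesis unfolding r_def vadd_def vsc_def using wk vc by simp
      next
        case False
        then have "v j = \<zero>" "w j = \<zero>" using that v wv unfolding vecs_def by auto
        then show ?thesis unfolding r_def vadd_def vsc_def using vc by simp
      qed
      moreover have "r v j \<in> carrier R" for j unfolding r_def vadd_def vsc_def using vc wc by simp
      ultimately show ?thesis unfolding vecs_def by auto
    qed
    have radd: "r (vadd R u v) = vadd R (r u) (r v)" if "u \<in> vecs R (Suc k)" "v \<in> vecs R (Suc k)" for u v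
    proof -
      have uc: "\<And>j. u j \<in> carrier R" "\<And>j. v j \<in> carrier R" using that vecs_carrier by blast+
      show ?thesis unfolding r_def vadd_def vsc_def
        by (rule ext) (simp add: uc wc l_distr a_ac)
    qed
    have rsc: "r (vsc R a v) = vsc R a (r v)" if "a \<in> carrier R" "v \<in> vecs R (Suc k)" for a v
    proof -
      have uc: "\<And>j. v j \<in> carrier R" using that vecs_carrier by blast+
      show ?thesis unfolding r_def vadd_def vsc_def
        by (rule ext) (simp add: uc wc r_distr m_assoc that)
    qed
    show ?thesis
    proof (rule exI[of _ P'], intro conjI ballI)
      fix v assume v: "v \<in> vecs R (Suc k)"
      show "P' v \<in> U" unfolding P'_def
        by (rule code_add[OF U], rule Pin[rule_format, OF rv[OF v]], rule code_sc[OF U _ wU])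
          (use v vecs_carrier in blast)
    next
      fix u v assume u: "u \<in> vecs R (Suc k)" and v: "v \<in> vecs R (Suc k)"
      have uc: "\<And>j. u j \<in> carrier R" "\<And>j. v j \<in> carrier R" using u v vecs_carrier by blast+
      have c1: "\<And>j. P (r u) j \<in> carrier R" "\<And>j. P (r v) j \<in> carrier R"
        using Pc rv u v by auto
      show "P' (vadd R u v) = vadd R (P' u) (P' v)"
        unfolding P'_def radd[OF u v] Padd[rule_format, OF rv[OF u] rv[OF v]]
        unfolding vadd_def vsc_def
        by (rule ext) (simp add: uc wc c1 l_distr a_ac)
    next
      fix a v assume a: "a \<in> carrier R" and v: "v \<in> vecs R (Suc k)"
      have uc: "\<And>j. v j \<in> carrier R" using v vecs_carrier by blast+
      have c1: "\<And>j. P (r v) j \<in> carrier R"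
        using Pc rv v by auto
      show "P' (vsc R a v) = vsc R a (P' v)"
        unfolding P'_def rsc[OF a v] Psc[rule_format, OF a rv[OF v]]
        unfolding vadd_def vsc_def
        by (rule ext) (simp add: uc wc c1 r_distr m_assoc a)
    next
      fix u assume u: "u \<in> U \<inter> vecs R (Suc k)"
      have uc: "\<And>j. u j \<in> carrier R" using u vecs_carrier by blast+
      have ruU: "r u \<in> U" unfolding r_def
        by (rule code_add[OF U], use u in blast, rule code_sc[OF U uc wU])
      have "P (r u) = r u" using Pfix ruU rv u by auto
      then show "P' u = u" unfolding P'_def r_def vadd_def vsc_def
        by (auto simp: uc wc a_assoc)
    qed
  next
    case False
    define tr where "tr v = (\<lambda>j. if j = k then \<zero> else v j)" for v :: "nat \<Rightarrow> nat"
    have trv: "tr v \<in> vecs R k" if v: "v \<in> vecs R (Suc k)" for v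
      using v unfolding vecs_def tr_def by auto
    show ?thesis
    proof (rule exI[of _ "\<lambda>v. P (tr v)"], intro conjI ballI)
      fix v assume v: "v \<in> vecs R (Suc k)"
      show "P (tr v) \<in> U" using Pin trv[OF v] by auto
    next
      fix u v assume u: "u \<in> vecs R (Suc k)" and v: "v \<in> vecs R (Suc k)"
      have "tr (vadd R u v) = vadd R (tr u) (tr v)" unfolding tr_def vadd_def by auto
      then show "P (tr (vadd R u v)) = vadd R (P (tr u)) (P (tr v))"
        using Padd trv u v by auto
    next
      fix a v assume a: "a \<in> carrier R" and v: "v \<in> vecs R (Suc k)"
      have "tr (vsc R a v) = vsc R a (tr v)" unfolding tr_def vsc_def using a by auto
      then show "P (tr (vsc R a v)) = vsc R a (P (tr v))"
        using Psc trv a v by auto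
    next
      fix u assume u: "u \<in> U \<inter> vecs R (Suc k)"
      then have "u k = \<zero>" using False by auto
      then have "tr u = u" unfolding tr_def by auto
      moreover have "u \<in> vecs R k" using u \<open>u k = \<zero>\<close> unfolding vecs_def
        by (auto, metis Suc_le_eq le_eq_less_or_eq)
      ultimately show "P (tr u) = u" using Pfix u by auto
    qed
  qed
qed

lemma proj:
  assumes U: "lin_code R n U"
  shows "\<exists>P. lin_map R n P \<and> (\<forall>v\<in>vecs R n. P v \<in> U) \<and> (\<forall>u\<in>U. P u = u)"
proof -
  obtain P where P: "\<forall>v\<in>vecs R n. P v \<in> U"
     "\<forall>u\<in>vecs R n. \<forall>v\<in>vecs R n. P (vadd R u v) = vadd R (P u) (P v)"
     "\<forall>a\<in>carrier R. \<forall>v\<in>vecs R n. P (vsc R a v) = vsc R a (P v)"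
     "\<forall>u\<in>U \<inter> vecs R n. P u = u" using proj_k[OF U, of n] by auto
  show ?thesis
    by (rule exI[of _ P]) (use P code_vecs[OF U] in \<open>auto simp: lin_map_def\<close>)
qed

end

context F2 begin

lemma functional:
  assumes C: "lin_code R n C" and prp: "C \<noteq> vecs R n"
  shows "\<exists>j0 f. j0 < n \<and> (\<forall>m. f m \<in> carrier R) \<and> f j0 = \<one>
           \<and> (\<forall>v\<in>C. (\<Oplus>m\<in>{..<n}. f m \<otimes> v m) = \<zero>)"
proof -
  have "\<exists>j0<n. uvec R j0 \<notin> C"
  proof (rule ccontr)
    assume "\<not> ?thesis"
    then have all: "\<forall>m<n. uvec R m \<in> C" by auto
    have "v \<in> C" if v: "v \<in> vecs R n" for v
    proof -
      have "(\<lambda>k. \<Oplus>m\<in>{..<n}. v m \<otimes> uvec R m k) \<in> C"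
        by (rule lincomb[OF C]) (use all v vecs_carrier in auto)
      then show ?thesis using expand[OF v] by simp
    qed
    then have "C = vecs R n" using code_vecs[OF C] by auto
    then show False using prp by simp
  qed
  then obtain j0 where j0: "j0 < n" "uvec R j0 \<notin> C" by auto
  obtain Q where Q: "lin_map R n Q" "\<forall>v\<in>vecs R n. Q v \<in> C" "\<forall>u\<in>C. Q u = u"
    using proj[OF C] by auto
  have Qv: "\<And>v. v \<in> vecs R n \<Longrightarrow> Q v \<in> vecs R n" using Q(1) lin_map_vecs by blast
  have Qc: "\<And>v j. v \<in> vecs R n \<Longrightarrow> Q v j \<in> carrier R" using Qv vecs_carrier by blast
  define w where "w = vadd R (uvec R j0) (Q (uvec R j0))"
  have wv: "w \<in> vecs R n" unfolding w_def using j0 Qv by simp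
  have "w \<noteq> (\<lambda>_. \<zero>)"
  proof
    assume w0: "w = (\<lambda>_. \<zero>)"
    have "uvec R j0 = Q (uvec R j0)"
    proof
      fix j
      have "uvec R j0 j \<oplus> Q (uvec R j0) j = \<zero>" using w0 unfolding w_def vadd_def by metis
      then have "uvec R j0 j \<oplus> (uvec R j0 j \<oplus> Q (uvec R j0) j) = uvec R j0 j"
        by simp
      then show "uvec R j0 j = Q (uvec R j0) j" using Qc[of "uvec R j0" j] j0 by simp
    qed
    then show False using Q(2) j0 by (metis uvec_vecs)
  qed
  then obtain k where k: "w k \<noteq> \<zero>" by auto
  have kn: "k < n" using k wv vecs_zero_out not_less by blast
  have wkc: "w k \<in> carrier R" using wv vecs_carrier by blast
  have ik: "inv (w k) \<in> carrier R" using wkc k field_Units by auto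
  have wki: "w k \<otimes> inv (w k) = \<one>" using wkc k field_Units by auto
  define f where "f m = (if m < n then (uvec R m k \<oplus> Q (uvec R m) k) \<otimes> inv (w k) else \<zero>)" for m
  show ?thesis
  proof (rule exI[of _ j0], rule exI[of _ f], intro conjI allI ballI)
    show "j0 < n" by (rule j0)
    show "f m \<in> carrier R" for m unfolding f_def using Qc ik by auto
    show "f j0 = \<one>" unfolding f_def using j0 wki unfolding w_def vadd_def by simp
  next
    fix v assume v: "v \<in> C"
    have vv: "v \<in> vecs R n" using code_vecs[OF C v] .
    have vc: "\<And>j. v j \<in> carrier R" using vv vecs_carrier by blast
    have QQ: "\<And>m. m < n \<Longrightarrow> Q (uvec R m) k \<in> carrier R" using Qc by simp
    have "(\<Oplus>m\<in>{..<n}. f m \<otimes> v m)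
        = (\<Oplus>m\<in>{..<n}. (v m \<otimes> uvec R m k \<oplus> v m \<otimes> Q (uvec R m) k) \<otimes> inv (w k))"
      by (rule finsum_cong') (auto simp: f_def QQ vc ik r_distr l_distr m_ac)
    also have "\<dots> = (\<Oplus>m\<in>{..<n}. (v m \<otimes> uvec R m k \<oplus> v m \<otimes> Q (uvec R m) k)) \<otimes> inv (w k)"
      by (rule finsum_ldistr[symmetric]) (auto simp: QQ vc ik)
    also have "(\<Oplus>m\<in>{..<n}. (v m \<otimes> uvec R m k \<oplus> v m \<otimes> Q (uvec R m) k))
        = (\<Oplus>m\<in>{..<n}. v m \<otimes> uvec R m k) \<oplus> (\<Oplus>m\<in>{..<n}. v m \<otimes> Q (uvec R m) k)"
      by (rule finsum_addf) (auto simp: QQ vc)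
    also have "(\<Oplus>m\<in>{..<n}. v m \<otimes> uvec R m k) = v k" using fun_cong[OF expand[OF vv], of k] by simp
    also have "(\<Oplus>m\<in>{..<n}. v m \<otimes> Q (uvec R m) k) = Q v k"
      using fun_cong[OF lin_expand[OF Q(1) vv], of k] by simp
    also have "Q v k = v k" using Q(3) v by simp
    finally show "(\<Oplus>m\<in>{..<n}. f m \<otimes> v m) = \<zero>" using vc ik by simp
  qed
qed

end


locale Arr = F2 R for R :: "nat ring" (structure) +
  fixes n t T :: nat
  assumes tT: "t = Suc T"
begin

abbreviation "Pos \<equiv> positions (\<lambda>_. n) t"
abbreviation "col x i p \<equiv> column R (\<lambda>_. n) x i p"
abbreviation "Arrs \<equiv> arrays R (\<lambda>_. n) t"

lemma T_lt[simp]: "T < t" using tT by simp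

lemma finite_Pos[simp]: "finite Pos"
  unfolding positions_def by (rule finite_PiE) auto

lemma pos_upd[simp]: "p \<in> Pos \<Longrightarrow> i < t \<Longrightarrow> k < n \<Longrightarrow> p(i := k) \<in> Pos"
  unfolding positions_def by (auto simp: PiE_iff extensional_def)

lemma pos_coord[simp]: "p \<in> Pos \<Longrightarrow> i < t \<Longrightarrow> p i < n"
  unfolding positions_def by (auto simp: PiE_iff)

lemma arr_carrier[simp]: "x \<in> Arrs \<Longrightarrow> x p \<in> carrier R"
  unfolding arrays_def by (cases "p \<in> Pos") auto

lemma arr_out: "x \<in> Arrs \<Longrightarrow> p \<notin> Pos \<Longrightarrow> x p = \<zero>"
  unfolding arrays_def by auto

lemma arrI: "(\<And>p. x p \<in> carrier R) \<Longrightarrow> (\<And>p. p \<notin> Pos \<Longrightarrow> x p = \<zero>) \<Longrightarrow> x \<in> Arrs"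
  unfolding arrays_def by auto

lemma col_vecs[simp]: "x \<in> Arrs \<Longrightarrow> col x i p \<in> vecs R n"
  unfolding column_def vecs_def by auto

lemma col_upd[simp]: "col x i (p(i := k)) = col x i p"
  unfolding column_def by (rule ext) simp

lemma col_app: "k < n \<Longrightarrow> col x i p k = x (p(i := k))"
  unfolding column_def by simp

lemma col_app_out: "\<not> k < n \<Longrightarrow> col x i p k = \<zero>"
  unfolding column_def by simp

lemma dir_arr: "x \<in> dir_code R (\<lambda>_. n) t C i \<Longrightarrow> x \<in> Arrs"
  unfolding dir_code_def by auto

lemma dir_col: "x \<in> dir_code R (\<lambda>_. n) t C i \<Longrightarrow> p \<in> Pos \<Longrightarrow> col x i p \<in> C i"
  unfolding dir_code_def by auto

lemma dir_add:
  assumes C: "lin_code R n (C i)" and x: "x \<in> dir_code R (\<lambda>_. n) t C i"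
    and y: "y \<in> dir_code R (\<lambda>_. n) t C i"
  shows "(\<lambda>p. x p \<oplus> y p) \<in> dir_code R (\<lambda>_. n) t C i"
proof -
  have xa: "x \<in> Arrs" and ya: "y \<in> Arrs" using x y dir_arr by auto
  have "col (\<lambda>p. x p \<oplus> y p) i p = vadd R (col x i p) (col y i p)" for p
    unfolding column_def vadd_def by auto
  moreover have "(\<lambda>p. x p \<oplus> y p) \<in> Arrs"
    by (rule arrI) (use xa ya in \<open>auto simp: arr_out[OF xa] arr_out[OF ya]\<close>)
  ultimately show ?thesis using x y code_add[OF C] unfolding dir_code_def by auto
qed

lemma dir_zero:
  assumes C: "lin_code R n (C i)"
  shows "(\<lambda>_. \<zero>) \<in> dir_code R (\<lambda>_. n) t C i"
proof -
  have "col (\<lambda>_. \<zero>) i p = (\<lambda>_. \<zero>)" for p unfolding column_def by auto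
  then show ?thesis using code_zero[OF C] unfolding dir_code_def arrays_def by auto
qed

lemma arr_sum_arr: "(\<forall>i<k. xs i \<in> Arrs) \<Longrightarrow> arr_sum R k xs \<in> Arrs"
proof (rule arrI)
  fix p assume "\<forall>i<k. xs i \<in> Arrs"
  then show "arr_sum R k xs p \<in> carrier R" unfolding arr_sum_def
    by (intro finsum_closed) auto
next
  fix p assume a: "\<forall>i<k. xs i \<in> Arrs" and p: "p \<notin> Pos"
  have "arr_sum R k xs p = (\<Oplus>i\<in>{..<k}. \<zero>)" unfolding arr_sum_def
    by (rule finsum_cong') (use a p arr_out in auto)
  then show "arr_sum R k xs p = \<zero>" by simp
qed

lemma arr_sum_Suc: "(\<forall>i<Suc k. xs i \<in> Arrs) \<Longrightarrow>
   arr_sum R (Suc k) xs p = arr_sum R k xs p \<oplus> xs k p"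
  unfolding arr_sum_def lessThan_Suc
  by (subst finsum_insert) (auto simp: Pi_def a_comm intro!: finsum_closed)

lemma arr_sum_cong: "(\<And>i. i < k \<Longrightarrow> xs i = ys i) \<Longrightarrow> (\<And>i. i < k \<Longrightarrow> ys i \<in> Arrs) \<Longrightarrow>
   arr_sum R k xs = arr_sum R k ys"
  unfolding arr_sum_def by (rule ext, rule finsum_cong) auto

lemma finsum_swap:
  assumes "finite A" "finite B" "\<And>a b. a \<in> A \<Longrightarrow> b \<in> B \<Longrightarrow> g a b \<in> carrier R"
  shows "(\<Oplus>a\<in>A. \<Oplus>b\<in>B. g a b) = (\<Oplus>b\<in>B. \<Oplus>a\<in>A. g a b)"
  using assms
proof (induction A rule: finite_induct)
  case empty
  then show ?case by (simp add: finsum_zero)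
next
  case (insert x A)
  have "(\<Oplus>a\<in>insert x A. \<Oplus>b\<in>B. g a b) = (\<Oplus>b\<in>B. g x b) \<oplus> (\<Oplus>a\<in>A. \<Oplus>b\<in>B. g a b)"
    by (rule finsum_insert) (use insert in \<open>auto simp: Pi_def intro!: finsum_closed\<close>)
  also have "(\<Oplus>a\<in>A. \<Oplus>b\<in>B. g a b) = (\<Oplus>b\<in>B. \<Oplus>a\<in>A. g a b)" using insert by auto
  also have "(\<Oplus>b\<in>B. g x b) \<oplus> (\<Oplus>b\<in>B. \<Oplus>a\<in>A. g a b) = (\<Oplus>b\<in>B. g x b \<oplus> (\<Oplus>a\<in>A. g a b))"
    by (rule finsum_addf[symmetric]) (use insert in \<open>auto simp: Pi_def intro!: finsum_closed\<close>)
  also have "\<dots> = (\<Oplus>b\<in>B. \<Oplus>a\<in>insert x A. g a b)"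
    by (rule finsum_cong') (use insert in \<open>auto simp: Pi_def intro!: finsum_closed finsum_insert[symmetric]\<close>)
  finally show ?case .
qed

end


locale Main = Arr +
  fixes C :: "nat \<Rightarrow> (nat \<Rightarrow> nat) set" and C' :: "(nat \<Rightarrow> nat) set"
    and P :: "(nat \<Rightarrow> nat) \<Rightarrow> nat \<Rightarrow> nat" and j0 :: nat
  assumes codes: "\<forall>i<t. lin_code R n (C i)"
    and C'code: "lin_code R n C'" and C'sub: "C' \<subseteq> C T"
    and Plin: "lin_map R n P" and Pin: "\<forall>v\<in>vecs R n. P v \<in> C'" and Pfix: "\<forall>u\<in>C'. P u = u"
    and j0: "j0 < n"
begin

definition G :: "nat \<Rightarrow> ((nat \<Rightarrow> nat) \<Rightarrow> nat) \<Rightarrow> (nat \<Rightarrow> nat) \<Rightarrow> nat" where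
  "G j x = (\<lambda>p. if p \<in> Pos \<and> p T = j0 then x (p(T := j)) \<oplus> P (col x T p) j else \<zero>)"

lemma Pv: "v \<in> vecs R n \<Longrightarrow> P v \<in> vecs R n" using lin_map_vecs[OF Plin] .
lemma Pc[simp]: "v \<in> vecs R n \<Longrightarrow> P v k \<in> carrier R" using Pv vecs_carrier by blast

lemma P0: "P (\<lambda>_. \<zero>) = (\<lambda>_. \<zero>)"
proof -
  have "P (\<lambda>_. \<zero>) = P (vsc R \<zero> (\<lambda>_. \<zero>))" by (simp add: vsc_def)
  also have "\<dots> = vsc R \<zero> (P (\<lambda>_. \<zero>))" using Plin unfolding lin_map_def by auto
  also have "\<dots> = (\<lambda>_. \<zero>)" unfolding vsc_def by auto
  finally show ?thesis .
qed

lemma col_add: "col (\<lambda>p. x p \<oplus> y p) i p = vadd R (col x i p) (col y i p)"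
  unfolding column_def vadd_def by auto

lemma G_arr: "x \<in> Arrs \<Longrightarrow> G j x \<in> Arrs"
  by (rule arrI) (auto simp: G_def)

lemma G_add:
  assumes x: "x \<in> Arrs" and y: "y \<in> Arrs"
  shows "G j (\<lambda>p. x p \<oplus> y p) = (\<lambda>p. G j x p \<oplus> G j y p)"
proof
  fix p
  have "P (col (\<lambda>p. x p \<oplus> y p) T p) = vadd R (P (col x T p)) (P (col y T p))"
    unfolding col_add using Plin x y unfolding lin_map_def by auto
  then show "G j (\<lambda>p. x p \<oplus> y p) p = G j x p \<oplus> G j y p"
    unfolding G_def vadd_def using x y by (auto simp: a_ac)
qed

lemma G_zero: "G j (\<lambda>_. \<zero>) = (\<lambda>_. \<zero>)"
proof -
  have "col (\<lambda>_. \<zero>) T p = (\<lambda>_. \<zero>)" for p unfolding column_def by auto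
  then show ?thesis unfolding G_def by (auto simp: P0)
qed

lemma arr_sum_0: "arr_sum R 0 xs = (\<lambda>_. \<zero>)"
  unfolding arr_sum_def by simp

lemma G_sum: "(\<forall>i<k. xs i \<in> Arrs) \<Longrightarrow> G j (arr_sum R k xs) = arr_sum R k (\<lambda>i. G j (xs i))"
proof (induction k)
  case 0
  then show ?case by (simp add: arr_sum_0 G_zero)
next
  case (Suc k)
  have e1: "arr_sum R (Suc k) xs = (\<lambda>p. arr_sum R k xs p \<oplus> xs k p)"
    using arr_sum_Suc Suc.prems by auto
  have e2: "arr_sum R (Suc k) (\<lambda>i. G j (xs i)) = (\<lambda>p. arr_sum R k (\<lambda>i. G j (xs i)) p \<oplus> G j (xs k) p)"
    using arr_sum_Suc[of k "\<lambda>i. G j (xs i)"] Suc.prems G_arr by auto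
  show ?case unfolding e1 e2
    by (subst G_add) (use Suc arr_sum_arr in auto)
qed

lemma G_dir:
  assumes i: "i < T" and j: "j < n" and x: "x \<in> dir_code R (\<lambda>_. n) t C i"
  shows "G j x \<in> dir_code R (\<lambda>_. n) t C i"
proof -
  have xa: "x \<in> Arrs" using dir_arr[OF x] .
  have Ci: "lin_code R n (C i)" using codes i tT by auto
  have iT: "i \<noteq> T" "T \<noteq> i" using i by auto
  have it: "i < t" using i tT by auto
  have "col (G j x) i p \<in> C i" if p: "p \<in> Pos" for p
  proof (cases "p T = j0")
    case False
    then have "col (G j x) i p = (\<lambda>_. \<zero>)" unfolding column_def G_def using iT by auto
    then show ?thesis using code_zero[OF Ci] by simp
  next
    case True
    have eq: "col (G j x) i p = vadd R (col x i (p(T := j)))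
        (\<lambda>k. \<Oplus>m\<in>{..<n}. P (uvec R m) j \<otimes> col x i (p(T := m)) k)"
    proof
      fix k
      show "col (G j x) i p k = vadd R (col x i (p(T := j)))
          (\<lambda>k. \<Oplus>m\<in>{..<n}. P (uvec R m) j \<otimes> col x i (p(T := m)) k) k"
      proof (cases "k < n")
        case True
        have pk: "p(i := k) \<in> Pos" using p it True by simp
        have "P (col x T (p(i := k))) j = (\<Oplus>m\<in>{..<n}. col x T (p(i := k)) m \<otimes> P (uvec R m) j)"
          using fun_cong[OF lin_expand[OF Plin col_vecs[OF xa, of T "p(i := k)"]], of j] by simp
        also have "\<dots> = (\<Oplus>m\<in>{..<n}. P (uvec R m) j \<otimes> col x i (p(T := m)) k)"
          by (rule finsum_cong') (use True xa in \<open>auto simp: col_app fun_upd_twist[OF iT(1)] m_comm\<close>)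
        finally show ?thesis using True pk \<open>p T = j0\<close> iT
          unfolding vadd_def by (simp add: col_app G_def fun_upd_twist[OF iT(1)])
      next
        case False
        have "(\<Oplus>m\<in>{..<n}. P (uvec R m) j \<otimes> col x i (p(T := m)) k) = (\<Oplus>m\<in>{..<n}. \<zero>)"
          by (rule finsum_cong') (use False in \<open>auto simp: col_app_out\<close>)
        then show ?thesis using False unfolding vadd_def by (simp add: col_app_out)
      qed
    qed
    show ?thesis unfolding eq
    proof (rule code_add[OF Ci])
      show "col x i (p(T := j)) \<in> C i" using dir_col[OF x] p j by simp
      show "(\<lambda>k. \<Oplus>m\<in>{..<n}. P (uvec R m) j \<otimes> col x i (p(T := m)) k) \<in> C i"
        by (rule lincomb[OF Ci]) (use dir_col[OF x] p in auto)
    qed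
  qed
  then show ?thesis using G_arr[OF xa] unfolding dir_code_def by auto
qed

lemma G_kill:
  assumes j: "j < n" and x: "x \<in> Arrs" and xc: "\<forall>p\<in>Pos. col x T p \<in> C'"
  shows "G j x = (\<lambda>_. \<zero>)"
proof
  fix p
  show "G j x p = \<zero>"
  proof (cases "p \<in> Pos \<and> p T = j0")
    case True
    have "P (col x T p) = col x T p" using Pfix xc True by auto
    then show ?thesis unfolding G_def using True j x by (simp add: col_app)
  qed (auto simp: G_def)
qed

end

context Main begin

abbreviation "D \<equiv> C(T := C')"

lemma dirD_C: "i < t \<Longrightarrow> x \<in> dir_code R (\<lambda>_. n) t D i \<Longrightarrow> x \<in> dir_code R (\<lambda>_. n) t C i"
  unfolding dir_code_def using C'sub by (cases "i = T") auto

lemma arr_add: "x \<in> Arrs \<Longrightarrow> y \<in> Arrs \<Longrightarrow> (\<lambda>p. x p \<oplus> y p) \<in> Arrs"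
  by (rule arrI) (auto simp: arr_out)

lemma arr_zero: "(\<lambda>_. \<zero>) \<in> Arrs"
  by (rule arrI) auto

lemma codeC: "i < t \<Longrightarrow> lin_code R n (C i)" using codes by auto

lemma zsum:
  assumes a: "\<forall>i<t. a i \<in> dir_code R (\<lambda>_. n) t D i"
    and cs: "\<forall>i<t. cs i \<in> dir_code R (\<lambda>_. n) t C i"
    and eq: "arr_sum R t a = arr_sum R t cs" and j: "j < n"
  shows "G j (cs T) = arr_sum R t (\<lambda>i. if i < T then (\<lambda>p. G j (cs i) p \<oplus> G j (a i) p) else (\<lambda>_. \<zero>))"
proof
  fix p
  have aa: "\<forall>i<t. a i \<in> Arrs" using a dir_arr by blast
  have ca: "\<forall>i<t. cs i \<in> Arrs" using cs dir_arr by blast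
  have Ga: "\<forall>i<t. G j (a i) \<in> Arrs" using aa G_arr by blast
  have Gc: "\<forall>i<t. G j (cs i) \<in> Arrs" using ca G_arr by blast
  have aT: "a T \<in> dir_code R (\<lambda>_. n) t D T" using a by simp
  have kill: "G j (a T) = (\<lambda>_. \<zero>)"
    by (rule G_kill[OF j]) (use aT in \<open>auto simp: dir_code_def\<close>)
  have "arr_sum R t (\<lambda>i. G j (a i)) = arr_sum R t (\<lambda>i. G j (cs i))"
    using G_sum[OF aa] G_sum[OF ca] eq by metis
  then have "arr_sum R t (\<lambda>i. G j (a i)) p = arr_sum R t (\<lambda>i. G j (cs i)) p" by simp
  then have e1: "arr_sum R T (\<lambda>i. G j (a i)) p \<oplus> \<zero> = arr_sum R T (\<lambda>i. G j (cs i)) p \<oplus> G j (cs T) p"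
    using arr_sum_Suc[of T "\<lambda>i. G j (a i)" p] arr_sum_Suc[of T "\<lambda>i. G j (cs i)" p] Ga Gc tT kill
    by simp
  define xx where "xx = arr_sum R T (\<lambda>i. G j (cs i)) p"
  define yy where "yy = arr_sum R T (\<lambda>i. G j (a i)) p"
  have Xc: "xx \<in> carrier R" unfolding xx_def using arr_sum_arr Gc tT by (simp add: arr_carrier)
  have Yc: "yy \<in> carrier R" unfolding yy_def using arr_sum_arr Ga tT by (simp add: arr_carrier)
  have Zc: "G j (cs T) p \<in> carrier R" using Gc by simp
  have e2: "G j (cs T) p = xx \<oplus> yy"
  proof -
    have "yy = xx \<oplus> G j (cs T) p" using e1 Yc unfolding xx_def yy_def by simp
    then show ?thesis using Xc Zc by simp
  qed
  define ys where "ys = (\<lambda>i. if i < T then (\<lambda>p. G j (cs i) p \<oplus> G j (a i) p) else (\<lambda>_. \<zero>))"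
  have ysa: "\<forall>i<t. ys i \<in> Arrs" unfolding ys_def
  proof (intro allI impI)
    fix i assume "i < t"
    then show "(if i < T then (\<lambda>p. G j (cs i) p \<oplus> G j (a i) p) else (\<lambda>_. \<zero>)) \<in> Arrs"
      using Ga Gc arr_add arr_zero by auto
  qed
  have "arr_sum R t ys p = arr_sum R T ys p \<oplus> \<zero>"
    using arr_sum_Suc[of T ys p] ysa tT by (simp add: ys_def)
  also have "arr_sum R T ys p = (\<Oplus>i\<in>{..<T}. G j (cs i) p \<oplus> G j (a i) p)"
    unfolding arr_sum_def ys_def by (rule finsum_cong') (use Ga Gc tT in auto)
  also have "\<dots> = xx \<oplus> yy" unfolding xx_def yy_def arr_sum_def
    by (rule finsum_addf) (use Ga Gc tT in auto)
  finally show "G j (cs T) p = arr_sum R t ys p" using e2 Xc Yc by simp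
qed

lemma zsum_code:
  assumes a: "\<forall>i<t. a i \<in> dir_code R (\<lambda>_. n) t D i"
    and cs: "\<forall>i<t. cs i \<in> dir_code R (\<lambda>_. n) t C i"
    and eq: "arr_sum R t a = arr_sum R t cs" and j: "j < n"
  shows "G j (cs T) \<in> sum_code R (\<lambda>_. n) t C"
proof -
  have "\<forall>i<t. (if i < T then (\<lambda>p. G j (cs i) p \<oplus> G j (a i) p) else (\<lambda>_. \<zero>)) \<in> dir_code R (\<lambda>_. n) t C i"
  proof (intro allI impI)
    fix i assume i: "i < t"
    show "(if i < T then (\<lambda>p. G j (cs i) p \<oplus> G j (a i) p) else (\<lambda>_. \<zero>)) \<in> dir_code R (\<lambda>_. n) t C i"
    proof (cases "i < T")
      case True
      then show ?thesis using dir_add[OF codeC[OF i] G_dir[OF True j] G_dir[OF True j]]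
        cs a dirD_C i by auto
    next
      case False
      then show ?thesis using dir_zero[of C i, OF codeC[OF i]] by simp
    qed
  qed
  then show ?thesis unfolding sum_code_def using zsum[OF assms] by blast
qed

end


locale Step = Main +
  fixes f :: "nat \<Rightarrow> nat" and a cs :: "nat \<Rightarrow> (nat \<Rightarrow> nat) \<Rightarrow> nat"
    and E :: "nat \<Rightarrow> nat \<Rightarrow> (nat \<Rightarrow> nat) \<Rightarrow> nat"
  assumes fc: "\<forall>m. f m \<in> carrier R" and fj0: "f j0 = \<one>"
    and fker: "\<forall>v\<in>C T. (\<Oplus>m\<in>{..<n}. f m \<otimes> v m) = \<zero>"
    and a: "\<forall>i<t. a i \<in> dir_code R (\<lambda>_. n) t (C(T := C')) i"
    and cs: "\<forall>i<t. cs i \<in> dir_code R (\<lambda>_. n) t C i"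
    and eq: "arr_sum R t a = arr_sum R t cs"
    and E: "\<forall>j<n. (\<forall>i<t. E j i \<in> dir_code R (\<lambda>_. n) t C i) \<and> G j (cs T) = arr_sum R t (E j)"
begin

definition "nT = (\<lambda>p. if p \<in> Pos then P (col (cs T) T p) (p T) else \<zero>)"
definition "dd = (\<lambda>p. cs T p \<oplus> nT p)"
definition "dl i = (\<lambda>p. if p \<in> Pos then (\<Oplus>m\<in>{..<n}. f m \<otimes> E (p T) i (p(T := m))) else \<zero>)"
definition "new i = (if i < T then (\<lambda>p. cs i p \<oplus> dl i p) else nT)"

lemma fc'[simp]: "f m \<in> carrier R" using fc by auto

lemma csa: "i < t \<Longrightarrow> cs i \<in> Arrs" using cs dir_arr by blast
lemma csT: "cs T \<in> Arrs" using csa by simp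
lemma Ea: "j < n \<Longrightarrow> i < t \<Longrightarrow> E j i \<in> Arrs" using E dir_arr by blast

lemma nT_arr: "nT \<in> Arrs"
  by (rule arrI) (auto simp: nT_def csT)

lemma col_nT: "p \<in> Pos \<Longrightarrow> col nT T p = P (col (cs T) T p)"
proof
  fix k assume p: "p \<in> Pos"
  show "col nT T p k = P (col (cs T) T p) k"
  proof (cases "k < n")
    case True
    then show ?thesis using p by (simp add: col_app nT_def)
  next
    case False
    then show ?thesis using Pv[OF col_vecs[OF csT]] vecs_zero_out
      by (simp add: col_app_out) (metis not_le)
  qed
qed

lemma nT_dir: "nT \<in> dir_code R (\<lambda>_. n) t (C(T := C')) T"
  unfolding dir_code_def using nT_arr col_nT Pin csT by auto

lemma dd_arr: "dd \<in> Arrs"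
  unfolding dd_def by (rule arr_add[OF csT nT_arr])

lemma dl_arr: "i < t \<Longrightarrow> dl i \<in> Arrs"
  by (rule arrI) (auto simp: dl_def Ea intro!: finsum_closed)

lemma dl_dir:
  assumes i: "i < T"
  shows "dl i \<in> dir_code R (\<lambda>_. n) t C i"
proof -
  have it: "i < t" using i tT by simp
  have iT: "i \<noteq> T" using i by simp
  have Ci: "lin_code R n (C i)" using codeC it .
  have "col (dl i) i p \<in> C i" if p: "p \<in> Pos" for p
  proof -
    have pT: "p T < n" using p by simp
    have eq: "col (dl i) i p = (\<lambda>k. \<Oplus>m\<in>{..<n}. f m \<otimes> col (E (p T) i) i (p(T := m)) k)"
    proof
      fix k
      show "col (dl i) i p k = (\<Oplus>m\<in>{..<n}. f m \<otimes> col (E (p T) i) i (p(T := m)) k)"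
      proof (cases "k < n")
        case True
        then show ?thesis using p it iT
          by (auto simp: col_app dl_def fun_upd_twist[OF iT] intro!: finsum_cong')
      next
        case False
        have "(\<Oplus>m\<in>{..<n}. f m \<otimes> col (E (p T) i) i (p(T := m)) k) = (\<Oplus>m\<in>{..<n}. \<zero>)"
          by (rule finsum_cong') (use False in \<open>auto simp: col_app_out\<close>)
        then show ?thesis using False by (simp add: col_app_out)
      qed
    qed
    show ?thesis unfolding eq
      by (rule lincomb[OF Ci]) (use E pT it p dir_col in auto)
  qed
  then show ?thesis using dl_arr[OF it] unfolding dir_code_def by auto
qed

lemma dl_T: "dl T = (\<lambda>_. \<zero>)"
proof
  fix p
  show "dl T p = \<zero>"
  proof (cases "p \<in> Pos")
    case True
    have pT: "p T < n" using True by simp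
    have "(\<Oplus>m\<in>{..<n}. f m \<otimes> E (p T) T (p(T := m))) = (\<Oplus>m\<in>{..<n}. f m \<otimes> col (E (p T) T) T p m)"
      by (rule finsum_cong') (auto simp: col_app Ea[OF pT])
    also have "\<dots> = \<zero>" using fker dir_col E pT True by auto
    finally show ?thesis using True by (simp add: dl_def)
  qed (simp add: dl_def)
qed

lemma Gval:
  assumes p: "p \<in> Pos" and m: "m < n"
  shows "G (p T) (cs T) (p(T := m)) = (if m = j0 then dd p else \<zero>)"
proof -
  have "col (cs T) T (p(T := m)) = col (cs T) T p" by simp
  then show ?thesis using p m
    by (auto simp: G_def dd_def nT_def)
qed

lemma dl_sum: "arr_sum R t dl = dd"
proof
  fix p
  show "arr_sum R t dl p = dd p"
  proof (cases "p \<in> Pos")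
    case False
    have "arr_sum R t dl p = \<zero>" using arr_out[OF arr_sum_arr False] dl_arr by auto
    moreover have "dd p = \<zero>" using arr_out[OF dd_arr False] .
    ultimately show ?thesis by simp
  next
    case True
    have pT: "p T < n" using True by simp
    have "arr_sum R t dl p = (\<Oplus>i\<in>{..<t}. \<Oplus>m\<in>{..<n}. f m \<otimes> E (p T) i (p(T := m)))"
      unfolding arr_sum_def dl_def using True
      by (intro finsum_cong') (auto simp: Ea[OF pT] intro!: finsum_closed)
    also have "\<dots> = (\<Oplus>m\<in>{..<n}. \<Oplus>i\<in>{..<t}. f m \<otimes> E (p T) i (p(T := m)))"
      by (rule finsum_swap) (auto simp: Ea[OF pT])
    also have "\<dots> = (\<Oplus>m\<in>{..<n}. f m \<otimes> arr_sum R t (E (p T)) (p(T := m)))"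
      unfolding arr_sum_def
      by (rule finsum_cong') (auto simp: Ea[OF pT] finsum_rdistr intro!: finsum_closed)
    also have "\<dots> = (\<Oplus>m\<in>{..<n}. f m \<otimes> G (p T) (cs T) (p(T := m)))"
      using E pT by simp
    also have "\<dots> = (\<Oplus>m\<in>{..<n}. if j0 = m then f m \<otimes> dd p else \<zero>)"
      by (rule finsum_cong') (auto simp: Gval[OF True] dd_arr)
    also have "\<dots> = f j0 \<otimes> dd p"
      by (rule finsum_singleton) (use j0 dd_arr in auto)
    finally show ?thesis using fj0 dd_arr by simp
  qed
qed

lemma new_dir: "i < t \<Longrightarrow> new i \<in> dir_code R (\<lambda>_. n) t (C(T := C')) i"
proof -
  assume it: "i < t"
  show ?thesis
  proof (cases "i < T")
    case True
    then have "new i \<in> dir_code R (\<lambda>_. n) t C i"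
      unfolding new_def using dir_add[of C i, OF codeC[OF it]] cs it dl_dir by auto
    moreover have "i \<noteq> T" using True by simp
    ultimately show ?thesis unfolding dir_code_def by simp
  next
    case False
    then have "i = T" using it tT by simp
    then show ?thesis using nT_dir by (simp add: new_def)
  qed
qed

lemma new_sum: "arr_sum R t new = arr_sum R t cs"
proof
  fix p
  have newa: "\<forall>i<t. new i \<in> Arrs" using new_dir dir_arr by blast
  have dla: "\<forall>i<t. dl i \<in> Arrs" using dl_arr by blast
  have csa': "\<forall>i<t. cs i \<in> Arrs" using csa by blast
  have newT: "new T = nT" by (simp add: new_def)
  have dlT: "arr_sum R T dl \<in> Arrs" by (rule arr_sum_arr) (use dl_arr tT in auto)
  have "arr_sum R t new p = arr_sum R T new p \<oplus> nT p"
    using arr_sum_Suc[of T new p] newa tT newT by simp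
  also have "arr_sum R T new p = (\<Oplus>i\<in>{..<T}. cs i p \<oplus> dl i p)"
    unfolding arr_sum_def new_def by (rule finsum_cong') (use csa dl_arr tT in auto)
  also have "\<dots> = arr_sum R T cs p \<oplus> arr_sum R T dl p"
    unfolding arr_sum_def by (rule finsum_addf) (use csa dl_arr tT in auto)
  also have "arr_sum R T dl p = dd p"
    using dlT dl_sum arr_sum_Suc[of T dl p] dla tT dl_T by (simp add: arr_carrier arr_sum_arr)
  finally have "arr_sum R t new p = arr_sum R T cs p \<oplus> dd p \<oplus> nT p" .
  also have "\<dots> = arr_sum R T cs p \<oplus> cs T p"
    unfolding dd_def using arr_sum_arr csa' tT csT nT_arr by (simp add: a_assoc)
  also have "\<dots> = arr_sum R t cs p"
    using arr_sum_Suc[of T cs p] csa' tT by simp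
  finally show "arr_sum R t new p = arr_sum R t cs p" .
qed

end

context Step begin

abbreviation "cw x i \<equiv> col_weight R (\<lambda>_. n) t x i"
abbreviation "wt x \<equiv> weight R (\<lambda>_. n) t x"

lemma fin_sub: "finite {p \<in> Pos. Q p}" by simp

lemma col_dl:
  assumes i: "i < T" and p: "p \<in> Pos"
  shows "col (dl i) i p = (\<lambda>k. \<Oplus>m\<in>{..<n}. f m \<otimes> col (E (p T) i) i (p(T := m)) k)"
proof
  have it: "i < t" using i tT by simp
  have iT: "i \<noteq> T" using i by simp
  fix k
  show "col (dl i) i p k = (\<Oplus>m\<in>{..<n}. f m \<otimes> col (E (p T) i) i (p(T := m)) k)"
  proof (cases "k < n")
    case True
    then show ?thesis using p it iT
      by (auto simp: col_app dl_def fun_upd_twist[OF iT] intro!: finsum_cong')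
  next
    case False
    have "(\<Oplus>m\<in>{..<n}. f m \<otimes> col (E (p T) i) i (p(T := m)) k) = (\<Oplus>m\<in>{..<n}. \<zero>)"
      by (rule finsum_cong') (use False in \<open>auto simp: col_app_out\<close>)
    then show ?thesis using False by (simp add: col_app_out)
  qed
qed

lemma W1:
  assumes i: "i < T"
  shows "cw (new i) i \<le> cw (cs i) i + cw (dl i) i"
proof -
  have it: "i < t" using i tT by simp
  have "{p \<in> Pos. p i = 0 \<and> col (new i) i p \<noteq> (\<lambda>_. \<zero>)} \<subseteq>
        {p \<in> Pos. p i = 0 \<and> col (cs i) i p \<noteq> (\<lambda>_. \<zero>)} \<union> {p \<in> Pos. p i = 0 \<and> col (dl i) i p \<noteq> (\<lambda>_. \<zero>)}"
  proof (safe)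
    fix p assume "p \<in> Pos" "p i = 0" "col (new i) i p \<noteq> (\<lambda>_. \<zero>)"
      "col (cs i) i p = (\<lambda>_. \<zero>)" "col (dl i) i p = (\<lambda>_. \<zero>)"
    moreover have "col (new i) i p = vadd R (col (cs i) i p) (col (dl i) i p)"
      unfolding new_def using i col_add by simp
    ultimately show False by (simp add: vadd_def)
  qed
  then have "cw (new i) i \<le> card ({p \<in> Pos. p i = 0 \<and> col (cs i) i p \<noteq> (\<lambda>_. \<zero>)} \<union> {p \<in> Pos. p i = 0 \<and> col (dl i) i p \<noteq> (\<lambda>_. \<zero>)})"
    unfolding col_weight_def by (intro card_mono) auto
  also have "\<dots> \<le> cw (cs i) i + cw (dl i) i"
    unfolding col_weight_def by (rule card_Un_le)
  finally show ?thesis .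
qed

lemma W2: "cw (new T) T \<le> cw (cs T) T"
proof -
  have "{p \<in> Pos. p T = 0 \<and> col (new T) T p \<noteq> (\<lambda>_. \<zero>)} \<subseteq> {p \<in> Pos. p T = 0 \<and> col (cs T) T p \<noteq> (\<lambda>_. \<zero>)}"
    using col_nT P0 by (auto simp: new_def)
  then show ?thesis unfolding col_weight_def by (intro card_mono) auto
qed

lemma W3:
  assumes i: "i < T"
  shows "cw (dl i) i \<le> (\<Sum>j<n. cw (E j i) i)"
proof -
  have it: "i < t" using i tT by simp
  have iT: "i \<noteq> T" using i by simp
  define S where "S = {p \<in> Pos. p i = 0 \<and> col (dl i) i p \<noteq> (\<lambda>_. \<zero>)}"
  define SE where "SE j = {q \<in> Pos. q i = 0 \<and> col (E j i) i q \<noteq> (\<lambda>_. \<zero>)}" for j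
  have ex: "\<exists>m. m < n \<and> col (E (p T) i) i (p(T := m)) \<noteq> (\<lambda>_. \<zero>)" if p: "p \<in> S" for p
  proof (rule ccontr)
    assume "\<not> ?thesis"
    then have z: "\<And>m. m < n \<Longrightarrow> col (E (p T) i) i (p(T := m)) = (\<lambda>_. \<zero>)" by auto
    have "col (dl i) i p = (\<lambda>k. \<Oplus>m\<in>{..<n}. f m \<otimes> col (E (p T) i) i (p(T := m)) k)"
      using col_dl[OF i] p unfolding S_def by auto
    also have "\<dots> = (\<lambda>k. \<Oplus>m\<in>{..<n}. \<zero>)"
      by (rule ext, rule finsum_cong') (auto simp: z)
    also have "\<dots> = (\<lambda>_. \<zero>)" by simp
    finally show False using p unfolding S_def by auto
  qed
  define mm where "mm p = (SOME m. m < n \<and> col (E (p T) i) i (p(T := m)) \<noteq> (\<lambda>_. \<zero>))" for p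
  have mm: "mm p < n \<and> col (E (p T) i) i (p(T := mm p)) \<noteq> (\<lambda>_. \<zero>)" if "p \<in> S" for p
    unfolding mm_def by (rule someI_ex[OF ex[OF that]])
  define g where "g p = (p T, p(T := mm p))" for p
  have inj: "inj_on g S"
  proof (rule inj_onI)
    fix p q assume "p \<in> S" "q \<in> S" "g p = g q"
    then have "p T = q T" "p(T := mm p) = q(T := mm q)" unfolding g_def by auto
    then have "(p(T := mm p))(T := p T) = (q(T := mm q))(T := q T)" by simp
    then show "p = q" by simp
  qed
  have img: "g ` S \<subseteq> Sigma {..<n} SE"
  proof
    fix x assume "x \<in> g ` S"
    then obtain p where p: "p \<in> S" and x: "x = g p" by auto
    have pP: "p \<in> Pos" and pi: "p i = 0" using p unfolding S_def by auto
    show "x \<in> Sigma {..<n} SE"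
      using mm[OF p] pP pi iT unfolding x g_def SE_def by auto
  qed
  have "card S \<le> card (Sigma {..<n} SE)"
    by (rule card_inj_on_le[OF inj img]) (auto simp: SE_def)
  also have "\<dots> = (\<Sum>j<n. card (SE j))"
    by (rule card_SigmaI) (auto simp: SE_def)
  finally show ?thesis unfolding col_weight_def S_def SE_def .
qed

lemma W4:
  assumes j: "j < n"
  shows "wt (G j (cs T)) \<le> cw (cs T) T"
proof -
  define Z where "Z = {p \<in> Pos. G j (cs T) p \<noteq> \<zero>}"
  define W where "W = {p \<in> Pos. p T = 0 \<and> col (cs T) T p \<noteq> (\<lambda>_. \<zero>)}"
  have Z: "p T = j0 \<and> col (cs T) T p \<noteq> (\<lambda>_. \<zero>)" if "p \<in> Z" for p
  proof -
    have pP: "p \<in> Pos" using that Z_def by auto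
    have a1: "p T = j0" using that unfolding Z_def G_def by (auto split: if_splits)
    have "col (cs T) T p \<noteq> (\<lambda>_. \<zero>)"
    proof
      assume c0: "col (cs T) T p = (\<lambda>_. \<zero>)"
      have "cs T (p(T := j)) = \<zero>" using fun_cong[OF c0, of j] j by (simp add: col_app)
      then have "G j (cs T) p = \<zero>" unfolding G_def using c0 P0 by simp
      then show False using that Z_def by auto
    qed
    then show ?thesis using a1 by simp
  qed
  have inj: "inj_on (\<lambda>p. p(T := 0)) Z"
  proof (rule inj_onI)
    fix p q assume "p \<in> Z" "q \<in> Z" "p(T := 0) = q(T := 0)"
    then have "(p(T := 0))(T := j0) = (q(T := 0))(T := j0)" by simp
    then show "p = q" using Z \<open>p \<in> Z\<close> \<open>q \<in> Z\<close> by (metis fun_upd_triv fun_upd_upd)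
  qed
  have img: "(\<lambda>p. p(T := 0)) ` Z \<subseteq> W"
  proof
    fix x assume "x \<in> (\<lambda>p. p(T := 0)) ` Z"
    then obtain p where p: "p \<in> Z" and x: "x = p(T := 0)" by auto
    have "p \<in> Pos" using p Z_def by auto
    then have "p(T := 0) \<in> Pos" using j by simp
    then show "x \<in> W" unfolding W_def x using Z[OF p] col_upd[of "cs T" T p 0] by auto
  qed
  have "card Z \<le> card W" by (rule card_inj_on_le[OF inj img]) (auto simp: W_def)
  then show ?thesis unfolding weight_def col_weight_def Z_def W_def .
qed

end

context Step begin

lemma final_bound:
  assumes rho: "\<rho> > 0"
    and Eb: "\<forall>j<n. \<rho> * (\<Sum>i<t. real n * real (cw (E j i) i)) \<le> real (wt (G j (cs T)))"
    and cb: "\<rho> * (\<Sum>i<t. real n * real (cw (cs i) i)) \<le> real w"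
  shows "\<rho> * \<rho> / (1 + \<rho>) * (\<Sum>i<t. real n * real (cw (new i) i)) \<le> real w"
proof -
  define N where "N = real n"
  have N0: "N \<ge> 0" unfolding N_def by simp
  have sT: "(\<Sum>i<t. g i) = (\<Sum>i<T. g i) + g T" for g :: "nat \<Rightarrow> real"
    using tT by simp
  define S where "S = (\<Sum>i<t. N * real (cw (cs i) i))"
  define K where "K = N * real (cw (cs T) T)"
  have K0: "K \<ge> 0" unfolding K_def using N0 by simp
  have SK: "K \<le> S" unfolding S_def K_def sT using N0
    by (simp add: sum_nonneg)
  have A1: "(\<Sum>i<T. N * real (cw (new i) i)) \<le> (\<Sum>i<T. N * real (cw (cs i) i) + N * real (cw (dl i) i))"
  proof (rule sum_mono)
    fix i assume "i \<in> {..<T}"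
    then have "real (cw (new i) i) \<le> real (cw (cs i) i) + real (cw (dl i) i)" using W1 by fastforce
    then show "N * real (cw (new i) i) \<le> N * real (cw (cs i) i) + N * real (cw (dl i) i)"
      using N0 by (metis distrib_left mult_left_mono)
  qed
  have Ej: "(\<Sum>i<T. N * real (cw (E j i) i)) \<le> real (cw (cs T) T) / \<rho>" if j: "j < n" for j
  proof -
    have "(\<Sum>i<T. N * real (cw (E j i) i)) \<le> (\<Sum>i<t. N * real (cw (E j i) i))"
      by (rule sum_mono2) (use tT N0 in auto)
    also have "\<dots> \<le> real (wt (G j (cs T))) / \<rho>"
      using Eb j rho unfolding N_def by (simp add: pos_le_divide_eq mult.commute)
    also have "\<dots> \<le> real (cw (cs T) T) / \<rho>"
      using W4[OF j] rho by (simp add: divide_right_mono)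
    finally show ?thesis .
  qed
  have A2: "(\<Sum>i<T. N * real (cw (dl i) i)) \<le> K / \<rho>"
  proof -
    have "(\<Sum>i<T. N * real (cw (dl i) i)) \<le> (\<Sum>i<T. N * (\<Sum>j<n. real (cw (E j i) i)))"
    proof (rule sum_mono)
      fix i assume "i \<in> {..<T}"
      then have "real (cw (dl i) i) \<le> (\<Sum>j<n. real (cw (E j i) i))" using W3
        by (metis lessThan_iff of_nat_le_iff of_nat_sum)
      then show "N * real (cw (dl i) i) \<le> N * (\<Sum>j<n. real (cw (E j i) i))"
        using N0 by (simp add: mult_left_mono)
    qed
    also have "\<dots> = (\<Sum>j<n. \<Sum>i<T. N * real (cw (E j i) i))"
      by (simp add: sum_distrib_left sum.swap[of _ "{..<T}"])
    also have "\<dots> \<le> (\<Sum>j<n. real (cw (cs T) T) / \<rho>)"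
      by (rule sum_mono) (use Ej in auto)
    also have "\<dots> = K / \<rho>" unfolding K_def N_def by simp
    finally show ?thesis .
  qed
  have A3: "N * real (cw (new T) T) \<le> K"
    unfolding K_def using W2 N0 by (simp add: mult_left_mono)
  have "(\<Sum>i<t. N * real (cw (new i) i)) \<le> S + K / \<rho>"
  proof -
    have "(\<Sum>i<t. N * real (cw (new i) i)) = (\<Sum>i<T. N * real (cw (new i) i)) + N * real (cw (new T) T)"
      by (rule sT)
    also have "\<dots> \<le> (\<Sum>i<T. N * real (cw (cs i) i) + N * real (cw (dl i) i)) + K"
      using A1 A3 by linarith
    also have "\<dots> = (\<Sum>i<T. N * real (cw (cs i) i)) + K + (\<Sum>i<T. N * real (cw (dl i) i))"
      by (simp add: sum.distrib)
    also have "(\<Sum>i<T. N * real (cw (cs i) i)) + K = S" unfolding S_def K_def sT ..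
    finally show ?thesis using A2 by linarith
  qed
  also have "\<dots> \<le> S + S / \<rho>" using SK rho by (simp add: divide_right_mono)
  finally have B: "(\<Sum>i<t. N * real (cw (new i) i)) \<le> S + S / \<rho>" .
  have "\<rho> * \<rho> / (1 + \<rho>) * (\<Sum>i<t. N * real (cw (new i) i)) \<le> \<rho> * \<rho> / (1 + \<rho>) * (S + S / \<rho>)"
    by (rule mult_left_mono[OF B]) (use rho in simp)
  also have "\<rho> * \<rho> / (1 + \<rho>) * (S + S / \<rho>) = \<rho> * S"
  proof -
    have r1: "1 + \<rho> \<noteq> 0" "\<rho> \<noteq> 0" using rho by auto
    have "S + S / \<rho> = S * (1 + \<rho>) / \<rho>" using r1 by (simp add: field_simps)
    then show ?thesis using r1 by simp
  qed
  also have "\<dots> \<le> real w" using cb unfolding S_def N_def .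
  finally show ?thesis unfolding N_def .
qed

end


theorem lemmaA2:
  shows "\<forall>\<rho>::real. \<forall>t::nat. \<rho> > 0 \<longrightarrow> t \<ge> 1 \<longrightarrow>
    (\<exists>\<rho>'::real. \<rho>' > 0 \<and>
      (\<forall>(R::nat ring) (n::nat) (C::nat \<Rightarrow> (nat \<Rightarrow> nat) set) (C'::(nat \<Rightarrow> nat) set).
         field R \<longrightarrow> finite (carrier R) \<longrightarrow> char_two R \<longrightarrow>
         (\<forall>i<t. lin_code R n (C i) \<and> C i \<noteq> vecs R n) \<longrightarrow>
         pe_at_least R (\<lambda>_. n) t C \<rho> \<longrightarrow>
         lin_code R n C' \<longrightarrow> C' \<subseteq> C (t - 1) \<longrightarrow>
         pe_at_least R (\<lambda>_. n) t (C((t - 1) := C')) \<rho>'))"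
proof (intro allI impI)
  fix \<rho> :: real and t :: nat
  assume rho: "\<rho> > 0" and t1: "t \<ge> 1"
  show "\<exists>\<rho>'::real. \<rho>' > 0 \<and>
      (\<forall>(R::nat ring) (n::nat) (C::nat \<Rightarrow> (nat \<Rightarrow> nat) set) (C'::(nat \<Rightarrow> nat) set).
         field R \<longrightarrow> finite (carrier R) \<longrightarrow> char_two R \<longrightarrow>
         (\<forall>i<t. lin_code R n (C i) \<and> C i \<noteq> vecs R n) \<longrightarrow>
         pe_at_least R (\<lambda>_. n) t C \<rho> \<longrightarrow>
         lin_code R n C' \<longrightarrow> C' \<subseteq> C (t - 1) \<longrightarrow>
         pe_at_least R (\<lambda>_. n) t (C((t - 1) := C')) \<rho>')"
  proof (rule exI[of _ "\<rho> * \<rho> / (1 + \<rho>)"], intro conjI allI impI)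
    show "\<rho> * \<rho> / (1 + \<rho>) > 0" using rho by simp
  next
    fix R :: "nat ring" and n :: nat and C :: "nat \<Rightarrow> (nat \<Rightarrow> nat) set" and C' :: "(nat \<Rightarrow> nat) set"
    assume fR: "field R" and "finite (carrier R)" and c2: "char_two R"
      and codes: "\<forall>i<t. lin_code R n (C i) \<and> C i \<noteq> vecs R n"
      and pe: "pe_at_least R (\<lambda>_. n) t C \<rho>"
      and C'c: "lin_code R n C'" and C's: "C' \<subseteq> C (t - 1)"
    define T where "T = t - 1"
    have tT: "t = Suc T" using t1 unfolding T_def by simp
    interpret F2 R
      by (rule F2.intro[OF fR]) (use c2 in \<open>simp add: F2_axioms_def char_two_def\<close>)
    obtain P where P: "lin_map R n P" "\<forall>v\<in>vecs R n. P v \<in> C'" "\<forall>u\<in>C'. P u = u"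
      using proj[OF C'c] by auto
    have cT: "lin_code R n (C T)" "C T \<noteq> vecs R n" using codes tT by auto
    obtain j0 f where jf: "j0 < n" "\<forall>m. f m \<in> carrier R" "f j0 = \<one>\<^bsub>R\<^esub>"
      "\<forall>v\<in>C T. (\<Oplus>\<^bsub>R\<^esub>m\<in>{..<n}. f m \<otimes>\<^bsub>R\<^esub> v m) = \<zero>\<^bsub>R\<^esub>"
      using functional[OF cT] by auto
    interpret M: Main R n t T C C' P j0
      by (rule Main.intro, rule Arr.intro) (use F2_axioms field_axioms tT codes C's P jf C'c T_def in
          \<open>auto simp: Arr_axioms_def Main_axioms_def\<close>)
    show "pe_at_least R (\<lambda>_. n) t (C((t - 1) := C')) (\<rho> * \<rho> / (1 + \<rho>))"
      unfolding pe_at_least_def T_def[symmetric]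
    proof
      fix c assume c: "c \<in> sum_code R (\<lambda>_. n) t (C(T := C'))"
      then obtain a where a: "\<forall>i<t. a i \<in> dir_code R (\<lambda>_. n) t (C(T := C')) i"
        and ca: "c = arr_sum R t a" unfolding sum_code_def by auto
      have "c \<in> sum_code R (\<lambda>_. n) t C" unfolding sum_code_def using a ca M.dirD_C by blast
      then obtain cs where cs: "\<forall>i<t. cs i \<in> dir_code R (\<lambda>_. n) t C i" and ccs: "c = arr_sum R t cs"
        and cb: "real (weight R (\<lambda>_. n) t c) \<ge> \<rho> * (\<Sum>i<t. real n * real (col_weight R (\<lambda>_. n) t (cs i) i))"
        using pe unfolding pe_at_least_def by blast
      have eq: "arr_sum R t a = arr_sum R t cs" using ca ccs by simp
      have "\<forall>j. \<exists>Ej. j < n \<longrightarrow> (\<forall>i<t. Ej i \<in> dir_code R (\<lambda>_. n) t C i) \<and> M.G j (cs T) = arr_sum R t Ej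
          \<and> real (weight R (\<lambda>_. n) t (M.G j (cs T))) \<ge> \<rho> * (\<Sum>i<t. real n * real (col_weight R (\<lambda>_. n) t (Ej i) i))"
      proof
        fix j
        show "\<exists>Ej. j < n \<longrightarrow> (\<forall>i<t. Ej i \<in> dir_code R (\<lambda>_. n) t C i) \<and> M.G j (cs T) = arr_sum R t Ej
          \<and> real (weight R (\<lambda>_. n) t (M.G j (cs T))) \<ge> \<rho> * (\<Sum>i<t. real n * real (col_weight R (\<lambda>_. n) t (Ej i) i))"
        proof (cases "j < n")
          case True
          have "M.G j (cs T) \<in> sum_code R (\<lambda>_. n) t C" by (rule M.zsum_code[OF a cs eq True])
          then show ?thesis using pe unfolding pe_at_least_def by blast
        qed simp
      qed
      then have "\<exists>E. \<forall>j. j < n \<longrightarrow> (\<forall>i<t. E j i \<in> dir_code R (\<lambda>_. n) t C i) \<and> M.G j (cs T) = arr_sum R t (E j)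
          \<and> real (weight R (\<lambda>_. n) t (M.G j (cs T))) \<ge> \<rho> * (\<Sum>i<t. real n * real (col_weight R (\<lambda>_. n) t (E j i) i))" by (rule choice)
      then obtain E where E: "\<forall>j. j < n \<longrightarrow> (\<forall>i<t. E j i \<in> dir_code R (\<lambda>_. n) t C i) \<and> M.G j (cs T) = arr_sum R t (E j)
          \<and> real (weight R (\<lambda>_. n) t (M.G j (cs T))) \<ge> \<rho> * (\<Sum>i<t. real n * real (col_weight R (\<lambda>_. n) t (E j i) i))" ..
      interpret S: Step R n t T C C' P j0 f a cs E
      proof (rule Step.intro[OF M.Main_axioms], unfold Step_axioms_def, intro conjI)
        show "\<forall>j<n. (\<forall>i<t. E j i \<in> dir_code R (\<lambda>_. n) t C i) \<and> M.G j (cs T) = arr_sum R t (E j)"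
          using E by blast
      qed (use jf a cs eq in auto)
      show "\<exists>cs. (\<forall>i<t. cs i \<in> dir_code R (\<lambda>_. n) t (C(T := C')) i) \<and> c = arr_sum R t cs \<and>
          \<rho> * \<rho> / (1 + \<rho>) * (\<Sum>i<t. real n * real (col_weight R (\<lambda>_. n) t (cs i) i)) \<le> real (weight R (\<lambda>_. n) t c)"
      proof (rule exI[of _ S.new], intro conjI)
        show "\<forall>i<t. S.new i \<in> dir_code R (\<lambda>_. n) t (C(T := C')) i" using S.new_dir by blast
        show "c = arr_sum R t S.new" using S.new_sum ccs by simp
        show "\<rho> * \<rho> / (1 + \<rho>) * (\<Sum>i<t. real n * real (col_weight R (\<lambda>_. n) t (S.new i) i)) \<le> real (weight R (\<lambda>_. n) t c)"
          by (rule S.final_bound[OF rho]) (use E cb in auto)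
      qed
    qed
  qed
qed


end
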